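(* Let $S\subset[0,\infty)$ with $0\in S$, and let $f\colon S\to[0,\infty)$ be a right-continuous decreasing function with $DP(\overline{f})\subset S$. Let $a,b\in S$ with $a<b$. Then: (1) If $0\leq\lambda<f(a)-f(b-)$, then for every $\mu>0$ there exists $c\in[a,b)\cap S$ with $\lambda<f(a)-f(c)$ and $f(a)-f(c-)<\lambda+\mu$. (2) For every $\varepsilon>0$ there exists a finite subset $F'=\{a=x'_0<x'_1<\cdots<x'_k=b\}\subset S$ such that $\max_{1\leq i\leq k}\{f(x'_{i-1})-f(x'_i-)\}<\varepsilon$.
   Context: For $S\subset[0,\infty)$ with $0\in S$, a function on $S$ is right-continuous if it is right-continuous for the relative topology of $S$. For a right-continuous decreasing $f\colon S\to[0,\infty)$ and $x\in\overline{S}$ (closure in $\mathbb{R}$), set $f(x+):=\sup\{f(y)\mid y\in(x,\infty)\cap S\}$ whenever $(x,\infty)\cap S\neq\emptyset$, and $f(x-):=\inf\{f(y)\mid y\in[0,x)\cap S\}$ if $x\neq0$, $f(0-):=f(0)$. Define $\overline{f}\colon\overline{S}\to[0,\infty)$ by $\overline{f}(x)=f(x)$ if $x\in S$, $\overline{f}(x)=f(x+)$ if $x\in\overline{S}\setminus S$ is a right accumulation point of $S$, and $\overline{f}(x)=f(x-)$ otherwise. With $\overline{f}(x-)$ defined by the same formula applied to $\overline{f}$ on $\overline{S}$, the set of left-jump points is $DP(\overline{f}):=\{x\in\overline{S}\setminus\{0\}\mid \overline{f}(x-)>\overline{f}(x)\}$. *)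

theory Defs
  imports "HOL-Analysis.Analysis"
begin

definition right_continuous_on :: "real set \<Rightarrow> (real \<Rightarrow> real) \<Rightarrow> bool" where
  "right_continuous_on S f \<longleftrightarrow> (\<forall>x\<in>S. continuous (at x within (S \<inter> {x..})) f)"

definition decreasing_on :: "real set \<Rightarrow> (real \<Rightarrow> real) \<Rightarrow> bool" where
  "decreasing_on S f \<longleftrightarrow> (\<forall>x\<in>S. \<forall>y\<in>S. x \<le> y \<longrightarrow> f y \<le> f x)"

definition right_lim :: "real set \<Rightarrow> (real \<Rightarrow> real) \<Rightarrow> real \<Rightarrow> real" where
  "right_lim S f x = Sup (f ` (S \<inter> {x<..}))"

definition left_lim :: "real set \<Rightarrow> (real \<Rightarrow> real) \<Rightarrow> real \<Rightarrow> real" where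
  "left_lim S f x = (if x = 0 then f 0 else Inf (f ` (S \<inter> {0..<x})))"

text \<open>The extension of f to the closure of S.\<close>
definition fbar :: "real set \<Rightarrow> (real \<Rightarrow> real) \<Rightarrow> real \<Rightarrow> real" where
  "fbar S f x = (if x \<in> S then f x
                 else if x islimpt (S \<inter> {x<..}) then right_lim S f x
                 else left_lim S f x)"

definition DP :: "real set \<Rightarrow> (real \<Rightarrow> real) \<Rightarrow> real set" where
  "DP S f = {x \<in> closure S - {0}. left_lim (closure S) (fbar S f) x > fbar S f x}"

end

theory Submission
  imports Defs
begin


lemma part1:
  fixes S :: "real set" and f :: "real \<Rightarrow> real" and a b l m :: real
  assumes S0: "S \<subseteq> {0..}" and z: "0 \<in> S"
    and fpos: "\<forall>x\<in>S. f x \<ge> 0"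
    and rc: "right_continuous_on S f" and dec: "decreasing_on S f"
    and dp: "DP S f \<subseteq> S"
    and aS: "a \<in> S" and ab: "a < b"
    and l0: "0 \<le> l" and lb: "l < f a - left_lim S f b" and m0: "m > 0"
  shows "\<exists>c \<in> {a..<b} \<inter> S. l < f a - f c \<and> f a - left_lim S f c < l + m"
proof -
  have a0: "a \<ge> 0" using S0 aS by auto
  have decr: "\<And>x y. x \<in> S \<Longrightarrow> y \<in> S \<Longrightarrow> x \<le> y \<Longrightarrow> f y \<le> f x"
    using dec unfolding decreasing_on_def by blast
  have bddb: "\<And>X. X \<subseteq> S \<Longrightarrow> bdd_below (f ` X)"
    using fpos by (meson bdd_belowI2 subsetD)
  have bdda: "\<And>X. X \<subseteq> S \<Longrightarrow> bdd_above (f ` X)"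
  proof -
    fix X assume "X \<subseteq> S"
    then have "\<forall>x\<in>X. f x \<le> f 0" using decr z S0 by auto
    then show "bdd_above (f ` X)" by (meson bdd_aboveI2)
  qed
  have llge: "\<And>t v. t \<in> S \<Longrightarrow> t > 0 \<Longrightarrow> (\<And>y. y \<in> S \<Longrightarrow> y < t \<Longrightarrow> v \<le> f y) \<Longrightarrow> v \<le> left_lim S f t"
  proof -
    fix t v assume "t \<in> S" "t > 0" and h: "\<And>y. y \<in> S \<Longrightarrow> y < t \<Longrightarrow> v \<le> f y"
    have "S \<inter> {0..<t} \<noteq> {}" using z \<open>t>0\<close> by auto
    then have "v \<le> Inf (f ` (S \<inter> {0..<t}))"
      by (intro cInf_greatest) (auto intro: h)
    then show "v \<le> left_lim S f t" using \<open>t>0\<close> by (simp add: left_lim_def)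
  qed
  define T where "T = {c \<in> S. a \<le> c \<and> c < b \<and> l < f a - f c}"
  have TS: "T \<subseteq> S" by (auto simp: T_def)
  have Tne: "T \<noteq> {}"
  proof -
    have b0: "b \<noteq> 0" using a0 ab by auto
    have ne: "f ` (S \<inter> {0..<b}) \<noteq> {}" using z a0 ab by auto
    have "Inf (f ` (S \<inter> {0..<b})) < f a - l" using lb b0 by (simp add: left_lim_def)
    then obtain y where y: "y \<in> S \<inter> {0..<b}" "f y < f a - l"
      using cInf_less_iff[OF ne bddb] by auto
    have "a \<le> y"
    proof (rule ccontr)
      assume "\<not> a \<le> y" then have "f a \<le> f y" using decr y aS by auto
      then show False using y l0 by auto
    qed
    then show ?thesis using y unfolding T_def by auto
  qed
  have Tbdd: "bdd_below T" by (auto simp: T_def intro!: bdd_belowI[of _ a])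
  define c0 where "c0 = Inf T"
  have c0a: "a \<le> c0" unfolding c0_def using Tne by (intro cInf_greatest) (auto simp: T_def)
  have c0le: "\<And>t. t \<in> T \<Longrightarrow> c0 \<le> t" unfolding c0_def using Tbdd by (simp add: cInf_lower)
  have c0b: "c0 < b" using Tne c0le by (force simp: T_def)
  have G: "\<And>y. y \<in> S \<Longrightarrow> y < c0 \<Longrightarrow> f a - l \<le> f y"
  proof -
    fix y assume y: "y \<in> S" "y < c0"
    show "f a - l \<le> f y"
    proof (cases "y < a")
      case True then show ?thesis using decr[OF y(1) aS] l0 by auto
    next
      case False
      have "y \<notin> T" using c0le y by force
      then show ?thesis using False y c0b unfolding T_def by auto
    qed
  qed
  have approach: "\<exists>t\<in>T. t < c0 + e" if "e > 0" for e
    using cInf_less_iff[OF Tne Tbdd, of "c0 + e"] that unfolding c0_def by auto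
  show ?thesis
  proof (cases "c0 \<in> T")
    case True
    have "c0 > a" using True l0 by (cases "c0 = a") (auto simp: T_def)
    then have "f a - l \<le> left_lim S f c0"
      using True a0 by (intro llge G) (auto simp: T_def)
    then show ?thesis using True m0 by (auto simp: T_def)
  next
    case False
    have key: "\<exists>t\<in>T. f a - l - m < f t"
    proof (cases "c0 \<in> S")
      case True
      have "continuous (at c0 within (S \<inter> {c0..})) f" using rc True unfolding right_continuous_on_def by blast
      then obtain d where d: "d > 0" "\<And>x'. x' \<in> S \<inter> {c0..} \<Longrightarrow> dist x' c0 < d \<Longrightarrow> dist (f x') (f c0) < m"
        using m0 unfolding continuous_within_eps_delta by metis
      obtain t where t: "t \<in> T" "t < c0 + d" using approach d by blast
      have "c0 \<le> t" using c0le t by auto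
      then have "dist (f t) (f c0) < m" using t TS d by (intro d(2)) (auto simp: dist_real_def)
      moreover have "f a - l \<le> f c0" using False True c0a c0b unfolding T_def by auto
      ultimately have "f a - l - m < f t" by (auto simp: dist_real_def)
      then show ?thesis using t by blast
    next
      case c0S: False
      have c0cl: "c0 \<in> closure S" using closure_contains_Inf[OF Tne Tbdd] closure_mono[OF TS] unfolding c0_def by blast
      have c0pos: "c0 > 0" using c0S z c0a a0 by (cases "c0 = 0") auto
      have lim: "c0 islimpt (S \<inter> {c0<..})"
        unfolding islimpt_approachable
      proof (intro allI impI)
        fix e :: real assume "e > 0"
        then obtain t where t: "t \<in> T" "t < c0 + e" using approach by blast
        have "t \<noteq> c0" using t False by auto
        moreover have "c0 \<le> t" using c0le t by auto
        ultimately show "\<exists>x'\<in>S \<inter> {c0<..}. x' \<noteq> c0 \<and> dist x' c0 < e"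
          using t TS by (intro bexI[of _ t]) (auto simp: dist_real_def)
      qed
      have fbarc0: "fbar S f c0 = Sup (f ` (S \<inter> {c0<..}))"
        using c0S lim by (simp add: fbar_def right_lim_def)
      have fbge: "f a - l \<le> fbar S f y" if y: "y \<in> closure S" "0 \<le> y" "y < c0" for y
      proof (cases "y \<in> S")
        case True then show ?thesis using G y by (simp add: fbar_def)
      next
        case yS: False
        show ?thesis
        proof (cases "y islimpt (S \<inter> {y<..})")
          case True
          obtain z where zz: "z \<in> S" "z > y" "f a - l \<le> f z"
          proof (cases "y < a")
            case True then show ?thesis using that[of a] aS l0 by auto
          next
            case False
            obtain x' where x': "x' \<in> S \<inter> {y<..}" "x' \<noteq> y" "dist x' y < c0 - y"
              using True y(3) unfolding islimpt_approachable by (meson diff_gt_0_iff_gt)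
            have "x' < c0" using x' by (auto simp: dist_real_def)
            then show ?thesis using that[of x'] x' G by auto
          qed
          have "f z \<le> Sup (f ` (S \<inter> {y<..}))"
            using zz by (intro cSup_upper bdda) auto
          then show ?thesis using zz yS True by (simp add: fbar_def right_lim_def)
        next
          case False
          have "y \<noteq> 0" using yS z by auto
          then have "y > 0" using y by auto
          have "S \<inter> {0..<y} \<noteq> {}" using z \<open>y>0\<close> by auto
          then have "f a - l \<le> Inf (f ` (S \<inter> {0..<y}))"
            by (intro cInf_greatest) (use G y in auto)
          then show ?thesis using yS False \<open>y \<noteq> 0\<close> by (simp add: fbar_def left_lim_def)
        qed
      qed
      have "closure S \<inter> {0..<c0} \<noteq> {}" using z c0pos closure_subset by fastforce
      then have "f a - l \<le> Inf (fbar S f ` (closure S \<inter> {0..<c0}))"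
        by (intro cInf_greatest) (use fbge in auto)
      then have "f a - l \<le> left_lim (closure S) (fbar S f) c0"
        using c0pos by (simp add: left_lim_def)
      moreover have "c0 \<notin> DP S f" using dp c0S by auto
      ultimately have "f a - l \<le> fbar S f c0" using c0cl c0pos unfolding DP_def by auto
      then have "f a - l - m < Sup (f ` (S \<inter> {c0<..}))" using m0 fbarc0 by auto
      moreover have "f ` (S \<inter> {c0<..}) \<noteq> {}"
      proof -
        obtain t where "t \<in> T" using Tne by blast
        then have "t \<in> S \<inter> {c0<..}" using False c0le[of t] TS by (cases "t = c0") auto
        then show ?thesis by blast
      qed
      ultimately obtain zz where zz: "zz \<in> S" "zz > c0" "f a - l - m < f zz"
        using less_cSup_iff[of "f ` (S \<inter> {c0<..})"] bdda[of "S \<inter> {c0<..}"] by auto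
      obtain t where t: "t \<in> T" "t < zz" using approach[of "zz - c0"] zz by auto
      have "f zz \<le> f t" using decr t zz TS by auto
      then have "f a - l - m < f t" using zz by linarith
      then show ?thesis using t by blast
    qed
    then obtain t where t: "t \<in> T" "f a - l - m < f t" by blast
    have "t > a" using t l0 by (cases "t = a") (auto simp: T_def)
    have "f t \<le> left_lim S f t"
      using t TS \<open>t > a\<close> a0 by (intro llge) (auto intro: decr)
    then show ?thesis using t by (auto simp: T_def)
  qed
qed

lemma part2:
  fixes S :: "real set" and f :: "real \<Rightarrow> real" and b e :: real
  assumes S0: "S \<subseteq> {0..}" and z: "0 \<in> S"
    and fpos: "\<forall>x\<in>S. f x \<ge> 0"
    and rc: "right_continuous_on S f" and dec: "decreasing_on S f"
    and dp: "DP S f \<subseteq> S"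
    and bS: "b \<in> S" and e0: "e > 0"
  shows "\<forall>p. p \<in> S \<longrightarrow> p < b \<longrightarrow> f p - f b < real n * (e/2) \<longrightarrow>
     (\<exists>(x :: nat \<Rightarrow> real) k.
            x 0 = p \<and> x k = b \<and> (\<forall>i\<le>k. x i \<in> S) \<and> (\<forall>i<k. x i < x (Suc i)) \<and>
            (\<forall>i\<in>{1..k}. f (x (i - 1)) - left_lim S f (x i) < e))"
proof (induction n)
  case 0
  then show ?case using dec bS unfolding decreasing_on_def by force
next
  case (Suc n)
  show ?case
  proof (intro allI impI)
    fix p assume pS: "p \<in> S" and pb: "p < b" and fp: "f p - f b < real (Suc n) * (e/2)"
    show "\<exists>(x :: nat \<Rightarrow> real) k.
            x 0 = p \<and> x k = b \<and> (\<forall>i\<le>k. x i \<in> S) \<and> (\<forall>i<k. x i < x (Suc i)) \<and>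
            (\<forall>i\<in>{1..k}. f (x (i - 1)) - left_lim S f (x i) < e)"
    proof (cases "f p - left_lim S f b < e")
      case True
      show ?thesis
        apply (rule exI[of _ "\<lambda>i. if i = 0 then p else b"], rule exI[of _ 1])
        using True pS bS pb by auto
    next
      case False
      obtain c where c: "c \<in> {p..<b} \<inter> S" "e/2 < f p - f c" "f p - left_lim S f c < e/2 + e/2"
        using part1[OF S0 z fpos rc dec dp pS pb, of "e/2" "e/2"] False e0 by auto
      have cp: "c > p" using c e0 by (cases "c = p") auto
      have "f c - f b < real n * (e/2)" using fp c by (simp add: algebra_simps)
      then obtain x k where x: "x 0 = c" "x k = b" "\<forall>i\<le>k. x i \<in> S" "\<forall>i<k. x i < x (Suc i)"
            "\<forall>i\<in>{1..k}. f (x (i - 1)) - left_lim S f (x i) < e"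
        using Suc.IH c by auto
      define y where "y = (\<lambda>i. if i = 0 then p else x (i - 1))"
      have "y 0 = p" "y (Suc k) = b" using x by (auto simp: y_def)
      moreover have "\<forall>i\<le>Suc k. y i \<in> S"
        using x(3) pS by (auto simp: y_def)
      moreover have "\<forall>i<Suc k. y i < y (Suc i)"
      proof (intro allI impI)
        fix i assume "i < Suc k"
        then show "y i < y (Suc i)"
          using x(4)[rule_format, of "i - 1"] x(1) cp by (cases i) (auto simp: y_def)
      qed
      moreover have "\<forall>i\<in>{1..Suc k}. f (y (i - 1)) - left_lim S f (y i) < e"
      proof
        fix i assume i: "i \<in> {1..Suc k}"
        show "f (y (i - 1)) - left_lim S f (y i) < e"
        proof (cases "i = 1")
          case True then show ?thesis using c x(1) by (simp add: y_def)
        next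
          case False
          then have "i - 1 \<in> {1..k}" using i by auto
          then have "f (x (i - 1 - 1)) - left_lim S f (x (i - 1)) < e" using x(5) by blast
          moreover have "i - 1 \<noteq> 0" "i \<noteq> 0" using False i by auto
          ultimately show ?thesis by (simp add: y_def)
        qed
      qed
      ultimately show ?thesis by blast
    qed
  qed
qed

theorem lemma2p4:
  fixes S :: "real set" and f :: "real \<Rightarrow> real" and a b :: real
  assumes "S \<subseteq> {0..}" and "0 \<in> S"
    and "\<forall>x\<in>S. f x \<ge> 0"
    and "right_continuous_on S f" and "decreasing_on S f"
    and "DP S f \<subseteq> S"
    and "a \<in> S" and "b \<in> S" and "a < b"
  shows "(\<forall>l m :: real. 0 \<le> l \<and> l < f a - left_lim S f b \<and> m > 0 \<longrightarrow>
            (\<exists>c \<in> {a..<b} \<inter> S. l < f a - f c \<and> f a - left_lim S f c < l + m))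
       \<and> (\<forall>\<epsilon>>0. \<exists>(x :: nat \<Rightarrow> real) k.
            x 0 = a \<and> x k = b \<and> (\<forall>i\<le>k. x i \<in> S) \<and> (\<forall>i<k. x i < x (Suc i)) \<and>
            (\<forall>i\<in>{1..k}. f (x (i - 1)) - left_lim S f (x i) < \<epsilon>))"
  proof (intro conjI allI impI)
  fix l m :: real assume h: "0 \<le> l \<and> l < f a - left_lim S f b \<and> m > 0"
  show "\<exists>c \<in> {a..<b} \<inter> S. l < f a - f c \<and> f a - left_lim S f c < l + m"
    using part1[OF assms(1-7) assms(9)] h by blast
next
  fix e :: real assume e: "e > 0"
  obtain n where n: "(f a - f b) / (e/2) < real n" using reals_Archimedean2 by blast
  then have "f a - f b < real n * (e/2)" using e by (simp add: field_simps)
  then show "\<exists>(x :: nat \<Rightarrow> real) k.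
            x 0 = a \<and> x k = b \<and> (\<forall>i\<le>k. x i \<in> S) \<and> (\<forall>i<k. x i < x (Suc i)) \<and>
            (\<forall>i\<in>{1..k}. f (x (i - 1)) - left_lim S f (x i) < e)"
    using part2[OF assms(1-6) assms(8) e, of n] assms(7,9) by blast
qed

end
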